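(* Let $X_1,\ldots,X_n\in\mathbb R^p$ ($n\ge1$) be given data, $\bar X=\frac1n\sum_i X_i$ and $S=\frac1n\sum_i(X_i-\bar X)(X_i-\bar X)^\top$. Let $\Psi\in\mathcal P_p$, $m\ge p$, $q\in\{1,2,\ldots\}$, and consider the (unnormalized) posterior $$\pi(\mu,\Sigma)=L(\mu,\Sigma)\cdot\mathcal W^{-q}(\Sigma\mid\Psi,m),\qquad \mu\in\mathbb R^p,\ \Sigma\in\mathcal P_p,$$ where $L(\mu,\Sigma)=|\Sigma|^{-n/2}\exp\big(-\tfrac12\sum_{i=1}^n(X_i-\mu)^\top\Sigma^{-1}(X_i-\mu)\big)$. Let $A=\Psi^{-1/2}S\Psi^{-1/2}$, write $A=V\operatorname{diag}(a_1,\ldots,a_p)V^\top$ with $V$ orthogonal, and let $N=n+p+qm+1$. Then: (i) for each $i$, the equation $q\lambda^q+n a_i\lambda-N=0$ has exactly one positive solution $\hat\lambda_i$; (ii) $\pi$ has a unique maximizer $(\hat\mu,\hat\Sigma)$ over $\mathbb R^p\times\mathcal P_p$, given by $\hat\mu=\bar X$ and $$\hat\Sigma=\Psi^{1/2}V\hat\Delta^{-1}V^\top\Psi^{1/2},\qquad \hat\Delta=\operatorname{diag}(\hat\lambda_1,\ldots,\hat\lambda_p).$$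
   Context: $\mathcal P_p$ is the set of positive definite $p\times p$ real matrices; $\Psi^{1/2}$ is the positive definite square root and $\Psi^{-1/2}=(\Psi^{1/2})^{-1}$. The power inverse Wishart density is $\mathcal W^{-q}(\Sigma\mid\Psi,m)=c_{m,q}^{-1}\exp(-\tfrac12\operatorname{tr}((\Psi^{-1/2}\Sigma\Psi^{-1/2})^{-q}))|\Psi|^{qm/2}|\Sigma|^{-(qm+p+1)/2}$ with $c_{m,q}\in(0,\infty)$ a normalizing constant. The maximizer of $\pi$ is called the (power inverse Wishart) MAP estimator; it corresponds to a power inverse Wishart prior on $\Sigma$ and an improper uniform prior on $\mu$. *)

theory Defs
  imports "HOL-Analysis.Analysis"
begin

definition pos_def_mat :: "real^'p^'p \<Rightarrow> bool" where
  "pos_def_mat M \<longleftrightarrow> transpose M = M \<and> (\<forall>x. x \<noteq> 0 \<longrightarrow> x \<bullet> (M *v x) > 0)"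

definition pd_sqrt :: "real^'p^'p \<Rightarrow> real^'p^'p" where
  "pd_sqrt M = (THE R. pos_def_mat R \<and> R ** R = M)"

definition mat_pow :: "real^'p^'p \<Rightarrow> nat \<Rightarrow> real^'p^'p" where
  "mat_pow M k = ((\<lambda>B. M ** B) ^^ k) (mat 1)"

definition diag_mat :: "real^'p \<Rightarrow> real^'p^'p" where
  "diag_mat a = (\<chi> i j. if i = j then a $ i else 0)"

definition outer :: "real^'p \<Rightarrow> real^'p \<Rightarrow> real^'p^'p" where
  "outer x y = (\<chi> i j. x $ i * y $ j)"

definition sample_mean :: "nat \<Rightarrow> (nat \<Rightarrow> real^'p) \<Rightarrow> real^'p" where
  "sample_mean n X = (1 / real n) *\<^sub>R (\<Sum>i<n. X i)"

definition sample_cov :: "nat \<Rightarrow> (nat \<Rightarrow> real^'p) \<Rightarrow> real^'p^'p" where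
  "sample_cov n X = (1 / real n) *\<^sub>R
     (\<Sum>i<n. outer (X i - sample_mean n X) (X i - sample_mean n X))"

definition likelihood :: "nat \<Rightarrow> (nat \<Rightarrow> real^'p) \<Rightarrow> real^'p \<Rightarrow> real^'p^'p \<Rightarrow> real" where
  "likelihood n X \<mu> \<Sigma> = det \<Sigma> powr (- real n / 2) *
     exp (- (1/2) * (\<Sum>i<n. (X i - \<mu>) \<bullet> (matrix_inv \<Sigma> *v (X i - \<mu>))))"

definition pow_inv_wishart :: "real \<Rightarrow> real^'p^'p \<Rightarrow> real \<Rightarrow> nat \<Rightarrow> real^'p^'p \<Rightarrow> real" where
  "pow_inv_wishart c \<Psi> m q \<Sigma> =
     (1 / c) * exp (- (1/2) * trace (mat_pow (matrix_inv
        (matrix_inv (pd_sqrt \<Psi>) ** \<Sigma> ** matrix_inv (pd_sqrt \<Psi>))) q))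
     * det \<Psi> powr (real q * m / 2)
     * det \<Sigma> powr (- (real q * m + real CARD('p) + 1) / 2)"

definition posterior :: "real \<Rightarrow> nat \<Rightarrow> (nat \<Rightarrow> real^'p) \<Rightarrow> real^'p^'p \<Rightarrow> real \<Rightarrow> nat
    \<Rightarrow> real^'p \<Rightarrow> real^'p^'p \<Rightarrow> real" where
  "posterior c n X \<Psi> m q \<mu> \<Sigma> = likelihood n X \<mu> \<Sigma> * pow_inv_wishart c \<Psi> m q \<Sigma>"

end

theory Submission
  imports Defs
begin

lemma quad_le0_imp: fixes b c :: real assumes "\<And>t. 2*t*b + t^2*c \<le> 0" shows "b = 0"
proof (rule ccontr)
  assume "b \<noteq> 0"
  define k where "k = \<bar>c\<bar> + 1"
  have k: "k > 0" unfolding k_def by linarith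
  define t where "t = b / k"
  have 1: "2*t*b + t^2*c \<le> 0" by (rule assms)
  have 2: "2*t*b + t^2*c = (b^2/k) * (2 + c/k)"
    using k unfolding t_def power2_eq_square by (simp add: divide_simps) (simp add: algebra_simps)
  have "-k < c" unfolding k_def by linarith
  then have "-1 < c/k" using k by (simp add: less_divide_eq)
  then have 3: "2 + c/k > 0" by linarith
  have 4: "b^2/k > 0" using \<open>b \<noteq> 0\<close> k by simp
  have "(b^2/k) * (2 + c/k) > 0" using 4 3 by (rule mult_pos_pos)
  then show False using 1 2 by linarith
qed

lemma sym_dot: fixes M :: "real^'n^'n" assumes "transpose M = M"
  shows "(M *v x) \<bullet> y = x \<bullet> (M *v y)"
proof -
  have "(M *v x) = x v* transpose M" by simp
  then show ?thesis using assms dot_lmul_matrix by metis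
qed

lemma cont_quad: "continuous_on S (\<lambda>x::real^'n. x \<bullet> ((M::real^'n^'n) *v x))"
  by (intro continuous_on_inner continuous_on_id linear_continuous_on matrix_vector_mul_bounded_linear)

lemma max_eigen:
  fixes M :: "real^'n^'n"
  assumes sym: "transpose M = M" and S: "subspace S" and inv: "\<And>x. x \<in> S \<Longrightarrow> M *v x \<in> S"
    and x: "x \<in> S" "norm x = 1"
    and max: "\<And>y. y \<in> S \<Longrightarrow> norm y = 1 \<Longrightarrow> y \<bullet> (M *v y) \<le> x \<bullet> (M *v x)"
  shows "M *v x = (x \<bullet> (M *v x)) *\<^sub>R x"
proof -
  define l where "l = x \<bullet> (M *v x)"
  have xx: "x \<bullet> x = 1" using x(2) by (simp add: norm_eq_1)
  have orth: "y \<bullet> (M *v x) = 0" if y: "y \<in> S" "y \<bullet> x = 0" for y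
  proof -
    have "2*t*(y \<bullet> (M *v x)) + t^2*(y \<bullet> (M *v y) - l * (y \<bullet> y)) \<le> 0" for t
    proof -
      define z where "z = x + t *\<^sub>R y"
      have zS: "z \<in> S" unfolding z_def using S x y by (simp add: subspace_add subspace_scale)
      have zz: "z \<bullet> z = 1 + t^2 * (y \<bullet> y)"
        unfolding z_def using xx y(2) by (simp add: algebra_simps inner_commute power2_eq_square)
      have zpos: "z \<bullet> z > 0" unfolding zz by (simp add: add_pos_nonneg)
      then have nz: "norm z > 0" by (simp add: inner_gt_zero_iff)
      define u where "u = (1 / norm z) *\<^sub>R z"
      have uS: "u \<in> S" unfolding u_def using zS S by (simp add: subspace_scale)
      have nu: "norm u = 1" unfolding u_def using nz by simp
      have "u \<bullet> (M *v u) = (z \<bullet> (M *v z)) / (norm z)^2"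
        unfolding u_def by (simp add: matrix_vector_mult_scaleR power2_eq_square)
      with max[OF uS nu] have "(z \<bullet> (M *v z)) / (norm z)^2 \<le> l" by (simp add: l_def)
      then have "z \<bullet> (M *v z) \<le> l * (norm z)^2" using nz by (simp add: divide_le_eq)
      also have "(norm z)^2 = z \<bullet> z" by (simp add: power2_norm_eq_inner)
      finally have le: "z \<bullet> (M *v z) \<le> l * (1 + t^2 * (y \<bullet> y))" using zz by simp
      have "z \<bullet> (M *v z) = l + 2*t*(y \<bullet> (M *v x)) + t^2 * (y \<bullet> (M *v y))"
      proof -
        have "x \<bullet> (M *v y) = y \<bullet> (M *v x)"
          using sym_dot[OF sym, of x y] by (simp add: inner_commute)
        then show ?thesis unfolding z_def l_def
          by (simp add: matrix_vector_right_distrib matrix_vector_mult_scaleR inner_add_left inner_add_right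
              algebra_simps power2_eq_square)
      qed
      with le show ?thesis by (simp add: algebra_simps)
    qed
    then show ?thesis by (rule quad_le0_imp)
  qed
  define w where "w = M *v x - l *\<^sub>R x"
  have wS: "w \<in> S" unfolding w_def using S x inv by (simp add: subspace_diff subspace_scale)
  have "x \<bullet> w = 0" unfolding w_def l_def using xx by (simp add: inner_diff_right)
  then have wx: "w \<bullet> x = 0" by (simp add: inner_commute)
  have "w \<bullet> w = w \<bullet> (M *v x) - l * (w \<bullet> x)" unfolding w_def
    by (simp add: inner_diff_right)
  also have "\<dots> = 0" using orth[OF wS wx] wx by simp
  finally have "w = 0" by simp
  then show ?thesis unfolding w_def l_def by simp
qed

lemma spectral_subspace:
  fixes M :: "real^'n^'n"
  assumes sym: "transpose M = M"
  shows "subspace S \<Longrightarrow> (\<And>x. x \<in> S \<Longrightarrow> M *v x \<in> S) \<Longrightarrow>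
    \<exists>B. B \<subseteq> S \<and> pairwise orthogonal B \<and> (\<forall>x\<in>B. norm x = 1 \<and> (\<exists>l. M *v x = l *\<^sub>R x)) \<and> span B = S"
proof (induction "dim S" arbitrary: S rule: less_induct)
  case less
  show ?case
  proof (cases "S = {0}")
    case True
    then show ?thesis by (intro exI[of _ "{}"]) auto
  next
    case False
    then obtain y where y: "y \<in> S" "y \<noteq> 0" using less.prems(1) subspace_0 by blast
    define K where "K = S \<inter> sphere 0 1"
    have "compact K" unfolding K_def
      using less.prems(1) by (intro closed_Int_compact closed_subspace compact_sphere)
    moreover have "(1 / norm y) *\<^sub>R y \<in> K" unfolding K_def using y less.prems(1)
      by (simp add: subspace_scale)
    then have "K \<noteq> {}" by blast
    ultimately obtain x where xK: "x \<in> K" and xmax: "\<forall>z\<in>K. z \<bullet> (M *v z) \<le> x \<bullet> (M *v x)"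
      using continuous_attains_sup[OF _ _ cont_quad] by blast
    have xS: "x \<in> S" and nx: "norm x = 1" using xK by (auto simp: K_def)
    have eig: "M *v x = (x \<bullet> (M *v x)) *\<^sub>R x"
      by (rule max_eigen[OF sym less.prems(1) less.prems(2) xS nx]) (use xmax K_def in auto)
    define l where "l = x \<bullet> (M *v x)"
    define S' where "S' = S \<inter> {z. x \<bullet> z = 0}"
    have "{z. x \<bullet> z = 0} = {y. orthogonal x y}" by (simp add: orthogonal_def)
    then have subS': "subspace S'" unfolding S'_def
      using less.prems(1) subspace_orthogonal_to_vector[of x]
      by (simp add: subspace_inter)
    have invS': "M *v z \<in> S'" if "z \<in> S'" for z
    proof -
      have "x \<bullet> (M *v z) = (M *v x) \<bullet> z" using sym_dot[OF sym] by simp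
      also have "\<dots> = l * (x \<bullet> z)" by (subst eig) (simp add: l_def)
      finally show ?thesis using that less.prems(2) by (auto simp: S'_def)
    qed
    have xx: "x \<bullet> x = 1" using nx by (simp add: norm_eq_1)
    have "x \<notin> S'" using xx unfolding S'_def by auto
    then have "S' \<subset> S" using xS unfolding S'_def by blast
    moreover have h1: "span S' = S'" using subS' by simp
    moreover have h2: "span S = S" using less.prems(1) by simp
    ultimately have "span S' \<subset> span S" by metis
    then have "dim S' < dim S" by (rule dim_psubset)
    from less.hyps[OF this subS' invS'] obtain B' where
      B': "B' \<subseteq> S'" "pairwise orthogonal B'" "\<forall>x\<in>B'. norm x = 1 \<and> (\<exists>l. M *v x = l *\<^sub>R x)"
          "span B' = S'" by blast
    define B where "B = insert x B'"
    have "x \<notin> B'" using B'(1) xx unfolding S'_def by auto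
    have "B \<subseteq> S" using B'(1) xS unfolding B_def S'_def by auto
    moreover have "pairwise orthogonal B" unfolding B_def
      using B'(1,2) by (auto simp: pairwise_insert orthogonal_def S'_def inner_commute)
    moreover have "\<forall>z\<in>B. norm z = 1 \<and> (\<exists>l. M *v z = l *\<^sub>R z)"
      unfolding B_def using B'(3) nx eig by blast
    moreover have "span B = S"
    proof
      show "span B \<subseteq> S" using \<open>B \<subseteq> S\<close> less.prems(1) by (simp add: span_minimal)
      show "S \<subseteq> span B"
      proof
        fix z assume zS: "z \<in> S"
        define r where "r = z - (x \<bullet> z) *\<^sub>R x"
        have "r \<in> S'" unfolding S'_def r_def using zS xS less.prems(1) xx
          by (simp add: subspace_diff subspace_scale inner_diff_right)
        then have "r \<in> span B" using B'(4) span_mono[of B' B] unfolding B_def by auto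
        moreover have "(x \<bullet> z) *\<^sub>R x \<in> span B" unfolding B_def by (simp add: span_base span_scale)
        ultimately have "r + (x \<bullet> z) *\<^sub>R x \<in> span B" by (rule span_add)
        then show "z \<in> span B" unfolding r_def by simp
      qed
    qed
    ultimately show ?thesis by blast
  qed
qed

lemma spectral:
  fixes M :: "real^'n^'n"
  assumes sym: "transpose M = M"
  obtains U mu where "orthogonal_matrix U" "M = U ** diag_mat mu ** transpose U"
proof -
  obtain B where B: "pairwise orthogonal B" "\<forall>x\<in>B. norm x = 1 \<and> (\<exists>l. M *v x = l *\<^sub>R x)"
      "span B = UNIV"
    using spectral_subspace[OF sym, of UNIV] by auto
  have "0 \<notin> B" using B(2) by force
  then have indep: "independent B" using B(1) pairwise_orthogonal_independent by blast
  then have finB: "finite B" using finiteI_independent by blast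
  have cB: "card B = CARD('n)" using B(3) by (simp add: indep indep_card_eq_dim_span)
  obtain f where f: "bij_betw f (UNIV::'n set) B"
    using finite_same_card_bij[OF _ finB] cB by (metis finite_class.finite_UNIV)
  have fB: "f j \<in> B" for j using f by (auto simp: bij_betw_def)
  have [simp]: "norm (f i) = 1" for i using B(2) fB by blast
  have [simp]: "orthogonal (f i) (f j)" if "i \<noteq> j" for i j
    using B(1) f that by (auto simp: pairwise_def bij_betw_def inj_on_def)
  define U where "U = (\<chi> i j. f j $ i)"
  have oU: "orthogonal_matrix U"
    by (simp add: U_def orthogonal_matrix_orthonormal_columns column_def)
  define mu where "mu = (\<chi> j. SOME l. M *v f j = l *\<^sub>R f j)"
  have eig: "M *v f j = (mu $ j) *\<^sub>R f j" for j
  proof -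
    have "\<exists>l. M *v f j = l *\<^sub>R f j" using B(2) fB by blast
    then show ?thesis unfolding mu_def vec_lambda_beta by (rule someI_ex)
  qed
  have MU: "M ** U = U ** diag_mat mu"
  proof -
    have "(M ** U) $ i $ j = (U ** diag_mat mu) $ i $ j" for i j
    proof -
      have "(M ** U) $ i $ j = (M *v f j) $ i"
        by (simp add: matrix_matrix_mult_def matrix_vector_mult_def U_def)
      also have "\<dots> = mu $ j * f j $ i" by (simp add: eig)
      also have "\<dots> = (U ** diag_mat mu) $ i $ j"
        by (simp add: matrix_matrix_mult_def U_def diag_mat_def if_distrib if_distribR
            sum.delta' cong: if_cong)
      finally show ?thesis .
    qed
    then show ?thesis by (simp add: vec_eq_iff)
  qed
  have "M = M ** (U ** transpose U)" using oU by (simp add: orthogonal_matrix_def)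
  also have "\<dots> = U ** diag_mat mu ** transpose U" by (simp add: matrix_mul_assoc MU)
  finally show ?thesis using oU that by blast
qed

lemma mul_diag_entry: "(U ** diag_mat s) $ i $ j = s $ j * U $ i $ j"
  by (simp add: matrix_matrix_mult_def diag_mat_def if_distrib if_distribR sum.delta' cong: if_cong)

lemma diag_mat_mul: "diag_mat a ** diag_mat b = diag_mat (\<chi> i. a $ i * b $ i)"
  by (simp add: vec_eq_iff mul_diag_entry) (simp add: diag_mat_def)

lemma diag_mat_one: "diag_mat (\<chi> i. 1) = mat 1"
  by (simp add: diag_mat_def mat_def vec_eq_iff)

lemma transpose_diag_mat [simp]: "transpose (diag_mat a) = diag_mat a"
  by (simp add: diag_mat_def transpose_def vec_eq_iff)

lemma diag_mat_vec: "diag_mat a *v x = (\<chi> i. a $ i * x $ i)"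
  by (simp add: diag_mat_def matrix_vector_mult_def vec_eq_iff if_distrib if_distribR sum.delta' cong: if_cong)

lemma det_diag_mat: "det (diag_mat a) = (\<Prod>i\<in>UNIV. a $ i)"
  by (subst det_diagonal) (auto simp: diag_mat_def)

lemma trace_diag_mat: "trace (diag_mat a) = (\<Sum>i\<in>UNIV. a $ i)"
  by (simp add: trace_def diag_mat_def)

lemma inv_unique: fixes A :: "real^'n^'n" assumes "A ** B = mat 1" shows "matrix_inv A = B"
proof -
  have BA: "B ** A = mat 1" using assms matrix_left_right_inverse by blast
  have "\<exists>A'. A ** A' = mat 1 \<and> A' ** A = mat 1" using assms BA by blast
  then have 1: "A ** matrix_inv A = mat 1 \<and> matrix_inv A ** A = mat 1"
    unfolding matrix_inv_def by (rule someI_ex)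
  have "matrix_inv A = matrix_inv A ** (A ** B)" using assms by simp
  also have "\<dots> = B" using 1 by (simp add: matrix_mul_assoc)
  finally show ?thesis .
qed

lemma orth_inv: "orthogonal_matrix U \<Longrightarrow> U ** transpose U = mat 1"
  by (simp add: orthogonal_matrix_def)
lemma orth_inv': "orthogonal_matrix U \<Longrightarrow> transpose U ** U = mat 1"
  by (simp add: orthogonal_matrix_def)

lemma mat_pow_Suc: "mat_pow M (Suc k) = M ** mat_pow M k"
  by (simp add: mat_pow_def)

lemma mat_pow_conj:
  fixes U :: "real^'n^'n"
  assumes "orthogonal_matrix U"
  shows "mat_pow (U ** diag_mat mu ** transpose U) q = U ** diag_mat (\<chi> i. mu $ i ^ q) ** transpose U"
proof (induction q)
  case 0
  show ?case using assms by (simp add: mat_pow_def diag_mat_one orth_inv)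
next
  case (Suc q)
  have "mat_pow (U ** diag_mat mu ** transpose U) (Suc q)
     = (U ** diag_mat mu ** transpose U) ** (U ** diag_mat (\<chi> i. mu $ i ^ q) ** transpose U)"
    by (simp add: mat_pow_Suc Suc.IH)
  also have "\<dots> = U ** diag_mat mu ** (transpose U ** U) ** diag_mat (\<chi> i. mu $ i ^ q) ** transpose U"
    by (simp add: matrix_mul_assoc)
  also have "\<dots> = U ** (diag_mat mu ** diag_mat (\<chi> i. mu $ i ^ q)) ** transpose U"
    using assms by (simp add: orth_inv' matrix_mul_assoc)
  also have "\<dots> = U ** diag_mat (\<chi> i. mu $ i ^ Suc q) ** transpose U"
    by (simp add: diag_mat_mul)
  finally show ?case .
qed

lemma col_mul: "(A ** B) $ i $ j = (A *v column j B) $ i"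
  by (simp add: matrix_matrix_mult_def matrix_vector_mult_def column_def)


lemma dot_mul_left: fixes U :: "real^'n^'m" shows "x \<bullet> (U *v y) = (transpose U *v x) \<bullet> y"
  by (metis dot_lmul_matrix transpose_matrix_vector inner_commute)

lemma transpose_conj: fixes U D :: "real^'n^'n" shows "transpose (U ** D ** transpose U) = U ** transpose D ** transpose U"
  by (simp add: matrix_transpose_mul matrix_mul_assoc)

lemma quad_conj:
  fixes U :: "real^'n^'n"
  shows "x \<bullet> ((U ** diag_mat mu ** transpose U) *v x) = (\<Sum>i\<in>UNIV. mu $ i * ((transpose U *v x) $ i)^2)"
proof -
  have "x \<bullet> ((U ** diag_mat mu ** transpose U) *v x) = (transpose U *v x) \<bullet> (diag_mat mu *v (transpose U *v x))"
    by (simp add: dot_mul_left matrix_vector_mul_assoc[symmetric])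
  also have "\<dots> = (\<Sum>i\<in>UNIV. mu $ i * ((transpose U *v x) $ i)^2)"
    by (simp add: inner_vec_def diag_mat_vec power2_eq_square mult_ac)
  finally show ?thesis .
qed

lemma orth_mulv_eq0: fixes U :: "real^'n^'n" assumes "orthogonal_matrix U"
  shows "transpose U *v x = 0 \<longleftrightarrow> x = 0"
proof
  assume h: "transpose U *v x = 0"
  have "x = (U ** transpose U) *v x" using assms by (simp add: orth_inv)
  also have "\<dots> = U *v (transpose U *v x)" by (simp only: matrix_vector_mul_assoc)
  also have "\<dots> = 0" by (simp only: h matrix_vector_mult_0_right)
  finally show "x = 0" .
qed simp

lemma pd_of_eig:
  fixes U :: "real^'n^'n"
  assumes "orthogonal_matrix U" "\<And>i. mu $ i > 0"
  shows "pos_def_mat (U ** diag_mat mu ** transpose U)"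
  unfolding pos_def_mat_def
proof (intro conjI allI impI)
  show "transpose (U ** diag_mat mu ** transpose U) = U ** diag_mat mu ** transpose U"
    by (simp add: transpose_conj)
  fix x :: "real^'n" assume "x \<noteq> 0"
  then obtain i where i: "(transpose U *v x) $ i \<noteq> 0"
    using orth_mulv_eq0[OF assms(1)] by (metis vec_eq_iff zero_index)
  have "(\<Sum>j\<in>UNIV. mu $ j * ((transpose U *v x) $ j)^2) > 0"
  proof (rule sum_pos2[where i=i])
    show "0 < mu $ i * (transpose U *v x) $ i ^ 2" using i assms(2) by simp
    show "0 \<le> mu $ j * (transpose U *v x) $ j ^ 2" for j using assms(2)[of j] by simp
  qed auto
  then show "0 < x \<bullet> ((U ** diag_mat mu ** transpose U) *v x)" by (simp add: quad_conj)
qed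

lemma conj_eigvec:
  fixes U :: "real^'n^'n"
  assumes "orthogonal_matrix U"
  shows "(U ** diag_mat mu ** transpose U) *v column j U = mu $ j *\<^sub>R column j U"
proof -
  have MU: "(U ** diag_mat mu ** transpose U) ** U = U ** diag_mat mu"
    using assms by (simp add: matrix_mul_assoc[symmetric] orth_inv')
  show ?thesis
  proof (subst vec_eq_iff, intro allI)
    fix i
    have "((U ** diag_mat mu ** transpose U) *v column j U) $ i = ((U ** diag_mat mu ** transpose U) ** U) $ i $ j"
      by (simp add: col_mul)
    also have "\<dots> = mu $ j * U $ i $ j" by (simp add: MU mul_diag_entry)
    finally show "((U ** diag_mat mu ** transpose U) *v column j U) $ i = (mu $ j *\<^sub>R column j U) $ i"
      by (simp add: column_def)
  qed
qed

lemma column_nonzero: fixes U :: "real^'n^'n" assumes "orthogonal_matrix U" shows "column j U \<noteq> 0"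
  using assms by (auto simp: orthogonal_matrix_orthonormal_columns dest: spec[of _ j])

lemma pd_eig_pos:
  fixes U :: "real^'n^'n"
  assumes "pos_def_mat M" "orthogonal_matrix U" "M = U ** diag_mat mu ** transpose U"
  shows "mu $ j > 0"
proof -
  let ?v = "column j U"
  have nz: "?v \<noteq> 0" using column_nonzero[OF assms(2)] .
  have "0 < ?v \<bullet> (M *v ?v)" using assms(1) nz by (simp add: pos_def_mat_def)
  also have "\<dots> = mu $ j * (?v \<bullet> ?v)" using conj_eigvec[OF assms(2)] assms(3) by simp
  finally have "0 < mu $ j * (?v \<bullet> ?v)" .
  moreover have "?v \<bullet> ?v > 0" using nz by simp
  ultimately show ?thesis by (auto simp: zero_less_mult_iff)
qed

lemma pd_decomp:
  fixes M :: "real^'n^'n"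
  assumes "pos_def_mat M"
  obtains U mu where "orthogonal_matrix U" "M = U ** diag_mat mu ** transpose U" "\<And>i. mu $ i > 0"
proof -
  obtain U mu where "orthogonal_matrix U" "M = U ** diag_mat mu ** transpose U"
    using spectral assms unfolding pos_def_mat_def by metis
  then show ?thesis using pd_eig_pos[OF assms] that by blast
qed

lemma pd_inj:
  fixes R :: "real^'n^'n"
  assumes "pos_def_mat R" "R *v w = 0" shows "w = 0"
  using assms unfolding pos_def_mat_def by force

lemma sqrt_unique_aux:
  fixes R :: "real^'n^'n"
  assumes R: "pos_def_mat R" "R ** R = U ** diag_mat mu ** transpose U"
    and U: "orthogonal_matrix U" and mu: "\<And>i. mu $ i > 0"
  shows "R = U ** diag_mat (\<chi> i. sqrt (mu $ i)) ** transpose U"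
proof -
  define s where "s = (\<chi> i. sqrt (mu $ i))"
  have col: "R *v column j U = s $ j *\<^sub>R column j U" for j
  proof -
    let ?u = "column j U"
    define w where "w = R *v ?u - s $ j *\<^sub>R ?u"
    have "R *v w + s $ j *\<^sub>R w = (R ** R) *v ?u - (s $ j * s $ j) *\<^sub>R ?u"
      unfolding w_def by (simp add: matrix_vector_mul_assoc[symmetric] matrix_vector_mult_diff_distrib
          matrix_vector_mult_scaleR algebra_simps)
    also have "\<dots> = 0" using R(2) conj_eigvec[OF U] mu[of j] by (simp add: s_def)
    finally have eq: "R *v w + s $ j *\<^sub>R w = 0" .
    have "w \<bullet> (R *v w) + s $ j * (w \<bullet> w) = w \<bullet> (R *v w + s $ j *\<^sub>R w)" by (simp add: inner_add_right)
    then have sum0: "w \<bullet> (R *v w) + s $ j * (w \<bullet> w) = 0" using eq by simp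
    have sj: "s $ j > 0" using mu[of j] by (simp add: s_def)
    show ?thesis
    proof (rule ccontr)
      assume "R *v ?u \<noteq> s $ j *\<^sub>R ?u"
      then have "w \<noteq> 0" by (simp add: w_def)
      then have "w \<bullet> (R *v w) > 0" "w \<bullet> w > 0" using R(1) by (auto simp: pos_def_mat_def)
      with sj sum0 show False by (smt (verit) mult_pos_pos)
    qed
  qed
  have RUe: "(R ** U) $ i $ j = s $ j * U $ i $ j" for i j
  proof -
    have "(R ** U) $ i $ j = (R *v column j U) $ i" by (rule col_mul)
    also have "\<dots> = s $ j * U $ i $ j" by (subst col) (simp add: column_def)
    finally show ?thesis .
  qed
  have RU: "R ** U = U ** diag_mat s"
    by (simp add: vec_eq_iff RUe mul_diag_entry)
  have "R = R ** (U ** transpose U)" using U by (simp add: orth_inv)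
  also have "\<dots> = U ** diag_mat s ** transpose U" by (simp add: matrix_mul_assoc RU)
  finally show ?thesis by (simp add: s_def)
qed

lemma conj_mul:
  fixes U :: "real^'n^'n" assumes "orthogonal_matrix U"
  shows "(U ** diag_mat a ** transpose U) ** (U ** diag_mat b ** transpose U) = U ** diag_mat (\<chi> i. a $ i * b $ i) ** transpose U"
proof -
  have "(U ** diag_mat a ** transpose U) ** (U ** diag_mat b ** transpose U) = U ** ((diag_mat a ** (transpose U ** U)) ** diag_mat b) ** transpose U"
    by (simp add: matrix_mul_assoc)
  also have "\<dots> = U ** diag_mat (\<chi> i. a $ i * b $ i) ** transpose U"
    using assms by (simp add: orth_inv' diag_mat_mul)
  finally show ?thesis .
qed

lemma pd_sqrt_props:
  fixes M :: "real^'n^'n"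
  assumes "pos_def_mat M"
  shows "pos_def_mat (pd_sqrt M) \<and> pd_sqrt M ** pd_sqrt M = M"
proof -
  obtain U mu where U: "orthogonal_matrix U" and M: "M = U ** diag_mat mu ** transpose U"
    and mu: "\<And>i. mu $ i > 0" using pd_decomp[OF assms] by blast
  define R0 where "R0 = U ** diag_mat (\<chi> i. sqrt (mu $ i)) ** transpose U"
  have "pos_def_mat R0" unfolding R0_def using U mu by (intro pd_of_eig) auto
  moreover have "R0 ** R0 = M"
  proof -
    have "R0 ** R0 = U ** diag_mat (\<chi> i. sqrt (mu $ i) * sqrt (mu $ i)) ** transpose U"
      unfolding R0_def using U by (simp add: conj_mul)
    also have "(\<chi> i. sqrt (mu $ i) * sqrt (mu $ i)) = mu"
      using mu by (simp add: vec_eq_iff less_imp_le)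
    finally show ?thesis using M by simp
  qed
  ultimately have ex: "\<exists>!R. pos_def_mat R \<and> R ** R = M"
    using sqrt_unique_aux[OF _ _ U mu] M unfolding R0_def by metis
  show ?thesis unfolding pd_sqrt_def by (rule theI'[OF ex])
qed

lemma pd_inverse:
  fixes M :: "real^'n^'n"
  assumes "pos_def_mat M"
  shows "M ** matrix_inv M = mat 1 \<and> matrix_inv M ** M = mat 1 \<and> pos_def_mat (matrix_inv M)"
proof -
  obtain U mu where U: "orthogonal_matrix U" and M: "M = U ** diag_mat mu ** transpose U"
    and mu: "\<And>i. mu $ i > 0" using pd_decomp[OF assms] by blast
  define Mi where "Mi = U ** diag_mat (\<chi> i. 1 / mu $ i) ** transpose U"
  have mu0: "mu $ i \<noteq> 0" for i using mu[of i] by simp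
  have 1: "M ** Mi = mat 1"
    using U unfolding M Mi_def by (simp add: conj_mul diag_mat_one orth_inv mu0)
  have 2: "Mi ** M = mat 1"
    using U unfolding M Mi_def by (simp add: conj_mul diag_mat_one orth_inv mu0)
  have "matrix_inv M = Mi" using inv_unique[OF 1] .
  moreover have "pos_def_mat Mi" unfolding Mi_def using U mu by (intro pd_of_eig) auto
  ultimately show ?thesis using 1 2 by simp
qed

lemma det_conj: fixes U :: "real^'n^'n" assumes "orthogonal_matrix U"
  shows "det (U ** D ** transpose U) = det D"
proof -
  have "det U * det U = 1" using det_orthogonal_matrix[OF assms] by auto
  then show ?thesis by (simp add: det_mul det_transpose)
qed

lemma trace_conj: fixes U :: "real^'n^'n" assumes "orthogonal_matrix U"
  shows "trace (U ** D ** transpose U) = trace D"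
proof -
  have "trace (U ** D ** transpose U) = trace (transpose U ** (U ** D))" by (rule trace_mul_sym)
  also have "\<dots> = trace D" using assms by (simp add: matrix_mul_assoc orth_inv')
  finally show ?thesis .
qed

lemma pd_sym: "pos_def_mat M \<Longrightarrow> transpose M = M"
  by (simp add: pos_def_mat_def)

lemma pd_congr:
  fixes P R :: "real^'n^'n"
  assumes P: "pos_def_mat P" and R: "pos_def_mat R"
  shows "pos_def_mat (R ** P ** R)"
  unfolding pos_def_mat_def
proof (intro conjI allI impI)
  show "transpose (R ** P ** R) = R ** P ** R"
    using pd_sym[OF P] pd_sym[OF R] by (simp add: matrix_transpose_mul matrix_mul_assoc)
  fix x :: "real^'n" assume x: "x \<noteq> 0"
  have Rx: "R *v x \<noteq> 0" using pd_inj[OF R] x by blast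
  have "x \<bullet> ((R ** P ** R) *v x) = x \<bullet> (R *v (P *v (R *v x)))"
    by (simp add: matrix_vector_mul_assoc matrix_mul_assoc)
  also have "\<dots> = (R *v x) \<bullet> (P *v (R *v x))"
    using pd_sym[OF R] by (simp add: dot_mul_left)
  also have "\<dots> > 0" using P Rx by (simp add: pos_def_mat_def)
  finally show "0 < x \<bullet> ((R ** P ** R) *v x)" .
qed

lemma R_props:
  fixes Psi :: "real^'n^'n"
  assumes "pos_def_mat Psi"
  shows "pos_def_mat (pd_sqrt Psi)" "pd_sqrt Psi ** pd_sqrt Psi = Psi"
    "pd_sqrt Psi ** matrix_inv (pd_sqrt Psi) = mat 1" "matrix_inv (pd_sqrt Psi) ** pd_sqrt Psi = mat 1"
    "pos_def_mat (matrix_inv (pd_sqrt Psi))"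
  using pd_sqrt_props[OF assms] pd_inverse[of "pd_sqrt Psi"] by auto

lemma Lam_props:
  fixes Psi Sig :: "real^'n^'n"
  assumes Psi: "pos_def_mat Psi" and Sig: "pos_def_mat Sig"
  defines "R \<equiv> pd_sqrt Psi" and "Ri \<equiv> matrix_inv (pd_sqrt Psi)"
  shows "matrix_inv (Ri ** Sig ** Ri) = R ** matrix_inv Sig ** R"
    and "pos_def_mat (R ** matrix_inv Sig ** R)"
    and "Sig = matrix_inv (Ri ** (R ** matrix_inv Sig ** R) ** Ri)"
    and "det Sig * det (R ** matrix_inv Sig ** R) = det Psi"
proof -
  note Rp = R_props[OF Psi, folded R_def Ri_def]
  note Sp = pd_inverse[OF Sig]
  let ?P = "matrix_inv Sig"
  have "(Ri ** Sig ** Ri) ** (R ** ?P ** R) = Ri ** (Sig ** ((Ri ** R) ** ?P)) ** R"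
    by (simp add: matrix_mul_assoc)
  also have "\<dots> = mat 1" using Rp Sp by simp
  finally show "matrix_inv (Ri ** Sig ** Ri) = R ** ?P ** R" by (rule inv_unique)
  show "pos_def_mat (R ** ?P ** R)" using pd_congr Sp Rp by blast
  have "Ri ** (R ** ?P ** R) ** Ri = (Ri ** R) ** ?P ** (R ** Ri)"
    by (simp add: matrix_mul_assoc)
  also have "\<dots> = ?P" using Rp by simp
  finally have "matrix_inv (Ri ** (R ** ?P ** R) ** Ri) = matrix_inv ?P" by simp
  also have "matrix_inv ?P = Sig" using Sp by (intro inv_unique) simp
  finally show "Sig = matrix_inv (Ri ** (R ** ?P ** R) ** Ri)" by simp
  have "det Sig * det ?P = det (Sig ** ?P)" by (simp add: det_mul)
  also have "\<dots> = 1" using Sp by (simp add: det_I)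
  finally have d1: "det Sig * det ?P = 1" .
  have "det R * det R = det (R ** R)" by (simp add: det_mul)
  then have d2: "det R * det R = det Psi" using Rp by simp
  show "det Sig * det (R ** ?P ** R) = det Psi"
    using d1 d2 by (simp add: det_mul algebra_simps)
qed

lemma trace_scaleR: "trace (c *\<^sub>R (M::real^'n^'n)) = c * trace M"
  by (simp add: trace_def sum_distrib_left)

lemma tr_outer_sum:
  fixes P :: "real^'n^'n" and e :: "nat \<Rightarrow> real^'n"
  shows "trace (P ** (\<Sum>i\<in>I. outer (e i) (e i))) = (\<Sum>i\<in>I. e i \<bullet> (P *v e i))"
proof -
  have "trace (P ** (\<Sum>i\<in>I. outer (e i) (e i))) = (\<Sum>a\<in>UNIV. \<Sum>b\<in>UNIV. \<Sum>i\<in>I. P$a$b * (e i $ b * e i $ a))"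
    by (simp add: trace_def matrix_matrix_mult_def outer_def sum_component sum_distrib_left)
  also have "\<dots> = (\<Sum>a\<in>UNIV. \<Sum>i\<in>I. \<Sum>b\<in>UNIV. P$a$b * (e i $ b * e i $ a))"
    by (intro sum.cong refl) (rule sum.swap)
  also have "\<dots> = (\<Sum>i\<in>I. \<Sum>a\<in>UNIV. \<Sum>b\<in>UNIV. P$a$b * (e i $ b * e i $ a))"
    by (rule sum.swap)
  also have "\<dots> = (\<Sum>i\<in>I. e i \<bullet> (P *v e i))"
    by (simp add: inner_vec_def matrix_vector_mult_def sum_distrib_left mult_ac)
  finally show ?thesis .
qed

lemma quad_split:
  fixes X :: "nat \<Rightarrow> real^'p" and P :: "real^'p^'p"
  assumes n: "n \<ge> 1" and sym: "transpose P = P"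
  shows "(\<Sum>i<n. (X i - nu) \<bullet> (P *v (X i - nu))) =
     real n * trace (P ** sample_cov n X) + real n * ((sample_mean n X - nu) \<bullet> (P *v (sample_mean n X - nu)))"
proof -
  define xb where "xb = sample_mean n X"
  define e where "e i = X i - xb" for i
  define d where "d = xb - nu"
  have sume: "(\<Sum>i<n. e i) = 0"
  proof -
    have "(\<Sum>i<n. e i) = (\<Sum>i<n. X i) - (\<Sum>i<n. xb)"
      by (simp add: e_def sum_subtractf)
    also have "(\<Sum>i<n. xb) = real n *\<^sub>R xb" by (subst sum_constant_scaleR) simp
    also have "real n *\<^sub>R xb = (\<Sum>i<n. X i)" using n by (simp add: xb_def sample_mean_def)
    finally show ?thesis by simp
  qed
  have expand: "(X i - nu) \<bullet> (P *v (X i - nu)) = e i \<bullet> (P *v e i) + 2 * ((P *v d) \<bullet> e i) + d \<bullet> (P *v d)" for i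
  proof -
    have Xi: "X i - nu = e i + d" by (simp add: e_def d_def)
    have "e i \<bullet> (P *v d) = (P *v d) \<bullet> e i" by (simp add: inner_commute)
    moreover have "d \<bullet> (P *v e i) = (P *v d) \<bullet> e i" using sym_dot[OF sym, of d "e i"] by simp
    ultimately show ?thesis unfolding Xi
      by (simp add: matrix_vector_right_distrib inner_add_left inner_add_right)
  qed
  have cross: "(\<Sum>i<n. (P *v d) \<bullet> e i) = 0"
    using sume by (simp add: inner_sum_right[symmetric])
  have tr: "(\<Sum>i<n. e i \<bullet> (P *v e i)) = real n * trace (P ** sample_cov n X)"
  proof -
    have "trace (P ** sample_cov n X) = (1 / real n) * trace (P ** (\<Sum>i<n. outer (e i) (e i)))"
      by (simp add: sample_cov_def e_def xb_def matrix_scalar_ac scalar_matrix_assoc[symmetric] trace_scaleR)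
    then show ?thesis using n by (simp add: tr_outer_sum)
  qed
  have "(\<Sum>i<n. (X i - nu) \<bullet> (P *v (X i - nu))) =
      (\<Sum>i<n. e i \<bullet> (P *v e i)) + 2 * (\<Sum>i<n. (P *v d) \<bullet> e i) + real n * (d \<bullet> (P *v d))"
    by (simp add: expand sum.distrib sum_distrib_left)
  also have "\<dots> = real n * trace (P ** sample_cov n X) + real n * (d \<bullet> (P *v d))"
    by (simp add: cross tr)
  finally show ?thesis by (simp add: d_def xb_def)
qed

lemma trace_sandwich:
  fixes P R Ri A :: "real^'n^'n"
  assumes "R ** Ri = mat 1" "Ri ** R = mat 1"
  shows "trace (P ** (R ** A ** R)) = trace ((R ** P ** R) ** A)"
proof -
  have "trace (P ** (R ** A ** R)) = trace ((P ** R ** A) ** R)" by (simp add: matrix_mul_assoc)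
  also have "\<dots> = trace (R ** (P ** R ** A))" by (rule trace_mul_sym)
  also have "\<dots> = trace ((R ** P ** R) ** A)" by (simp add: matrix_mul_assoc)
  finally show ?thesis .
qed

lemma sandwich_back:
  fixes R Ri S :: "real^'n^'n"
  assumes "R ** Ri = mat 1" "Ri ** R = mat 1"
  shows "R ** (Ri ** S ** Ri) ** R = S"
proof -
  have "R ** (Ri ** S ** Ri) ** R = (R ** Ri) ** S ** (Ri ** R)" by (simp add: matrix_mul_assoc)
  also have "\<dots> = S" using assms by simp
  finally show ?thesis .
qed

lemma trace_diag_left: "trace (diag_mat mu ** Y) = (\<Sum>j\<in>UNIV. mu $ j * Y $ j $ j)"
  by (simp add: trace_def matrix_matrix_mult_def diag_mat_def if_distrib if_distribR sum.delta cong: if_cong)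

lemma tWDW_diag: "(transpose W ** diag_mat a ** W) $ j $ j = (\<Sum>k\<in>UNIV. a $ k * (W $ k $ j)^2)"
  by (simp add: matrix_matrix_mult_def diag_mat_def transpose_def if_distrib if_distribR sum.delta
      power2_eq_square mult_ac cong: if_cong)

lemma trace_cross:
  fixes U V :: "real^'n^'n"
  shows "trace ((U ** diag_mat mu ** transpose U) ** (V ** diag_mat a ** transpose V)) =
    (\<Sum>j\<in>UNIV. \<Sum>k\<in>UNIV. mu $ j * a $ k * ((transpose V ** U) $ k $ j)^2)"
proof -
  let ?W = "transpose V ** U"
  have tW: "transpose ?W = transpose U ** V" by (simp add: matrix_transpose_mul)
  have "trace ((U ** diag_mat mu ** transpose U) ** (V ** diag_mat a ** transpose V))
      = trace (U ** (diag_mat mu ** (transpose U ** V ** diag_mat a ** transpose V)))"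
    by (simp add: matrix_mul_assoc)
  also have "\<dots> = trace ((diag_mat mu ** (transpose U ** V ** diag_mat a ** transpose V)) ** U)"
    by (rule trace_mul_sym)
  also have "\<dots> = trace (diag_mat mu ** (transpose ?W ** diag_mat a ** ?W))"
    by (simp add: tW matrix_mul_assoc)
  also have "\<dots> = (\<Sum>j\<in>UNIV. \<Sum>k\<in>UNIV. mu $ j * a $ k * (?W $ k $ j)^2)"
    by (simp add: trace_diag_left tWDW_diag sum_distrib_left mult_ac)
  finally show ?thesis .
qed

lemma orth_col_sum: fixes W :: "real^'n^'n" assumes "orthogonal_matrix W"
  shows "(\<Sum>k\<in>UNIV. (W $ k $ j)^2) = 1"
proof -
  have "norm (column j W) = 1" using assms by (simp add: orthogonal_matrix_orthonormal_columns)
  then have "column j W \<bullet> column j W = 1" by (simp add: norm_eq_1)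
  then show ?thesis by (simp add: inner_vec_def column_def power2_eq_square)
qed

lemma orth_row_sum: fixes W :: "real^'n^'n" assumes "orthogonal_matrix W"
  shows "(\<Sum>j\<in>UNIV. (W $ k $ j)^2) = 1"
proof -
  have "norm (row k W) = 1" using assms by (simp add: orthogonal_matrix_orthonormal_rows)
  then have "row k W \<bullet> row k W = 1" by (simp add: norm_eq_1)
  then show ?thesis by (simp add: inner_vec_def row_def power2_eq_square)
qed

lemma root_unique:
  fixes A N :: real and q :: nat
  assumes "A \<ge> 0" "q \<ge> 1" "N \<ge> 1"
  shows "\<exists>!l. l > 0 \<and> real q * l ^ q + A * l - N = 0"
proof -
  define f where "f l = real q * l ^ q + A * l - N" for l
  have cont: "continuous_on {0..N} f" unfolding f_def by (intro continuous_intros)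
  have f0: "f 0 \<le> 0" using assms by (simp add: f_def power_0_left)
  have "N \<le> N ^ q" using assms by (simp add: power_increasing[of 1 q N, simplified])
  also have "\<dots> \<le> real q * N ^ q" using assms by (simp add: mult_le_cancel_right1)
  finally have "N \<le> real q * N ^ q" .
  moreover have "A * N \<ge> 0" using assms by simp
  ultimately have "0 \<le> f N" by (simp add: f_def)
  then obtain l where l: "0 \<le> l" "l \<le> N" "f l = 0" using IVT'[of f 0 0 N] f0 cont assms by auto
  have lpos: "l > 0" using l assms by (cases "l = 0") (auto simp: f_def power_0_left)
  have mono: "f x < f y" if "0 < x" "x < y" for x y
  proof -
    have "x ^ q < y ^ q" using that assms by (intro power_strict_mono) auto
    then have "real q * x ^ q < real q * y ^ q" using assms by simp
    moreover have "A * x \<le> A * y" using that assms by (intro mult_left_mono) auto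
    ultimately show ?thesis by (simp add: f_def)
  qed
  show ?thesis
  proof (rule ex1I[of _ l])
    show "l > 0 \<and> real q * l ^ q + A * l - N = 0" using lpos l by (simp add: f_def)
    fix y assume y: "y > 0 \<and> real q * y ^ q + A * y - N = 0"
    then have fy: "f y = 0" by (simp add: f_def)
    show "y = l"
    proof (rule ccontr)
      assume "y \<noteq> l"
      then have "y < l \<or> l < y" by auto
      then show False using mono[of y l] mono[of l y] y lpos fy l(3) by auto
    qed
  qed
qed

lemma ln_strict: fixes x :: real assumes "x > 0" "x \<noteq> 1" shows "ln x < x - 1"
proof -
  have "ln x \<le> x - 1" using assms ln_le_minus_one by blast
  moreover have "ln x \<noteq> x - 1"
  proof
    assume eq: "ln x = x - 1"
    have "ln (sqrt x) \<le> sqrt x - 1" using assms ln_le_minus_one by simp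
    moreover have "ln (sqrt x) = ln x / 2" using assms by (simp add: ln_sqrt)
    ultimately have "x - 1 \<le> 2 * sqrt x - 2" using eq by simp
    then have "(sqrt x - 1)^2 \<le> 0" using assms by (simp add: power2_eq_square algebra_simps)
    then have "sqrt x = 1" by simp
    then show False using assms by simp
  qed
  ultimately show ?thesis by simp
qed

lemma phi_max:
  fixes A N t l :: real and q :: nat
  assumes "N > 0" "l > 0" "t > 0" "real q * l ^ q + A * l - N = 0"
  shows "N * ln t - A * t - t ^ q \<le> N * ln l - A * l - l ^ q"
    and "t \<noteq> l \<Longrightarrow> N * ln t - A * t - t ^ q < N * ln l - A * l - l ^ q"
proof -
  define x where "x = t / l"
  have x: "x > 0" using assms by (simp add: x_def)
  have t: "t = l * x" using assms by (simp add: x_def)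
  have lnt: "ln t = ln l + ln x" using assms x by (simp add: t ln_mult)
  have tq: "t ^ q = l ^ q * x ^ q" by (simp add: t power_mult_distrib)
  have Neq: "N = real q * l ^ q + A * l" using assms(4) by simp
  have "1 + real q * (x - 1) \<le> (1 + (x - 1)) ^ q" using x by (intro Bernoulli_inequality) simp
  then have b: "l ^ q * (1 + real q * (x - 1)) \<le> l ^ q * x ^ q" using assms by (intro mult_left_mono) auto
  have key: "N * (x - 1) - A * l * x - l ^ q * (1 + real q * (x - 1)) = - A * l - l ^ q"
    by (subst Neq) (simp add: algebra_simps)
  have lnx: "ln x \<le> x - 1" using x ln_le_minus_one by blast
  then have h1: "N * ln x \<le> N * (x - 1)" using assms by (intro mult_left_mono) auto
  show "N * ln t - A * t - t ^ q \<le> N * ln l - A * l - l ^ q"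
    using h1 b key unfolding lnt tq by (simp add: t algebra_simps)
  assume "t \<noteq> l"
  then have "x \<noteq> 1" using t by auto
  then have "ln x < x - 1" using x ln_strict by blast
  then have h2: "N * ln x < N * (x - 1)" using assms by simp
  show "N * ln t - A * t - t ^ q < N * ln l - A * l - l ^ q"
    using h2 b key unfolding lnt tq by (simp add: t algebra_simps)
qed

lemma det_pos_pd: fixes M :: "real^'n^'n" assumes "pos_def_mat M" shows "det M > 0"
proof -
  obtain U mu where U: "orthogonal_matrix U" and M: "M = U ** diag_mat mu ** transpose U"
    and mu: "\<And>i. mu $ i > 0" using pd_decomp[OF assms] by blast
  show ?thesis using mu unfolding M det_conj[OF U] det_diag_mat by (simp add: prod_pos)
qed

lemma post_formula:
  fixes X :: "nat \<Rightarrow> real^'p" and Psi Sig U V :: "real^'p^'p" and mu a nu :: "real^'p"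
  assumes n: "n \<ge> 1" and Psi: "pos_def_mat Psi" and Sig: "pos_def_mat Sig"
    and U: "orthogonal_matrix U" and mu: "\<And>i. mu $ i > 0"
    and Lam: "pd_sqrt Psi ** matrix_inv Sig ** pd_sqrt Psi = U ** diag_mat mu ** transpose U"
    and V: "orthogonal_matrix V"
    and A: "matrix_inv (pd_sqrt Psi) ** sample_cov n X ** matrix_inv (pd_sqrt Psi) = V ** diag_mat a ** transpose V"
    and Ndef: "N = real n + real CARD('p) + real q * m + 1"
  shows "posterior c n X Psi m q nu Sig =
    ((1/c) * det Psi powr (real q * m / 2) * exp (- (N/2) * ln (det Psi))) *
    exp ((1/2) * (\<Sum>j\<in>UNIV. \<Sum>k\<in>UNIV. ((transpose V ** U) $ k $ j)^2 * (N * ln (mu $ j) - real n * a $ k * mu $ j - mu $ j ^ q))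
         - (real n / 2) * ((sample_mean n X - nu) \<bullet> (matrix_inv Sig *v (sample_mean n X - nu))))"
proof -
  define R where "R = pd_sqrt Psi"
  define Ri where "Ri = matrix_inv (pd_sqrt Psi)"
  define P where "P = matrix_inv Sig"
  define W where "W = transpose V ** U"
  define Q where "Q = (sample_mean n X - nu) \<bullet> (P *v (sample_mean n X - nu))"
  define T where "T = (\<Sum>j\<in>UNIV. \<Sum>k\<in>UNIV. mu $ j * a $ k * (W $ k $ j)^2)"
  note Rp = R_props[OF Psi, folded R_def Ri_def]
  note LP = Lam_props[OF Psi Sig, folded R_def Ri_def P_def]
  have oW: "orthogonal_matrix W" unfolding W_def using U V by (simp add: orthogonal_matrix_mul)
  have Lam': "R ** P ** R = U ** diag_mat mu ** transpose U" using Lam by (simp add: R_def P_def)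
  have trq: "trace (mat_pow (matrix_inv (Ri ** Sig ** Ri)) q) = (\<Sum>j\<in>UNIV. mu $ j ^ q)"
    by (simp add: LP(1) Lam' mat_pow_conj[OF U] trace_conj[OF U] trace_diag_mat)
  have detL: "det (R ** P ** R) = (\<Prod>j\<in>UNIV. mu $ j)"
    by (simp add: Lam' det_conj[OF U] det_diag_mat)
  have detLpos: "(\<Prod>j\<in>UNIV. mu $ j) > 0" using mu by (simp add: prod_pos)
  have dSig: "det Sig > 0" using det_pos_pd[OF Sig] .
  have dPsi: "det Psi > 0" using det_pos_pd[OF Psi] .
  have lnSig: "ln (det Sig) = ln (det Psi) - (\<Sum>j\<in>UNIV. ln (mu $ j))"
  proof -
    have pne: "(\<Prod>j\<in>UNIV. mu $ j) \<noteq> 0" using detLpos by linarith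
    have "det Sig = det Psi / (\<Prod>j\<in>UNIV. mu $ j)"
      by (rule eq_divide_imp[OF pne]) (use LP(4) detL in simp)
    then have "ln (det Sig) = ln (det Psi / (\<Prod>j\<in>UNIV. mu $ j))" by (rule arg_cong)
    also have "\<dots> = ln (det Psi) - ln (\<Prod>j\<in>UNIV. mu $ j)" 
      using dPsi by (simp add: ln_div less_imp_neq[OF mu, symmetric])
    also have "ln (\<Prod>j\<in>UNIV. mu $ j) = (\<Sum>j\<in>UNIV. ln (mu $ j))"
      using mu by (intro ln_prod) (auto simp: less_imp_neq[symmetric])
    finally show ?thesis .
  qed
  have quad: "(\<Sum>i<n. (X i - nu) \<bullet> (P *v (X i - nu))) = real n * T + real n * Q"
  proof -
    have symP: "transpose P = P" using pd_inverse[OF Sig] pd_sym unfolding P_def by blast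
    have S: "sample_cov n X = R ** (Ri ** sample_cov n X ** Ri) ** R"
      using sandwich_back[OF Rp(3) Rp(4)] by simp
    have "trace (P ** sample_cov n X) = trace ((R ** P ** R) ** (Ri ** sample_cov n X ** Ri))"
      by (subst S) (rule trace_sandwich[OF Rp(3) Rp(4)])
    also have "\<dots> = T" unfolding Lam' A[folded Ri_def] T_def W_def by (rule trace_cross)
    finally show ?thesis using quad_split[OF n symP] by (simp add: Q_def)
  qed
  have G: "(\<Sum>j\<in>UNIV. \<Sum>k\<in>UNIV. (W $ k $ j)^2 * (N * ln (mu $ j) - real n * a $ k * mu $ j - mu $ j ^ q))
        = N * (\<Sum>j\<in>UNIV. ln (mu $ j)) - real n * T - (\<Sum>j\<in>UNIV. mu $ j ^ q)"
  proof -
    have "(\<Sum>k\<in>UNIV. (W $ k $ j)^2 * (N * ln (mu $ j) - real n * a $ k * mu $ j - mu $ j ^ q))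
        = (N * ln (mu $ j) - mu $ j ^ q) * (\<Sum>k\<in>UNIV. (W $ k $ j)^2) - real n * (\<Sum>k\<in>UNIV. mu $ j * a $ k * (W $ k $ j)^2)" for j
    proof -
      have "(\<Sum>k\<in>UNIV. (W $ k $ j)^2 * (N * ln (mu $ j) - real n * a $ k * mu $ j - mu $ j ^ q))
          = (\<Sum>k\<in>UNIV. (N * ln (mu $ j) - mu $ j ^ q) * (W $ k $ j)^2 - real n * (mu $ j * a $ k * (W $ k $ j)^2))"
        by (intro sum.cong refl) (simp add: algebra_simps)
      also have "\<dots> = (N * ln (mu $ j) - mu $ j ^ q) * (\<Sum>k\<in>UNIV. (W $ k $ j)^2) - real n * (\<Sum>k\<in>UNIV. mu $ j * a $ k * (W $ k $ j)^2)"
        by (simp add: sum_subtractf sum_distrib_left)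
      finally show ?thesis .
    qed
    then have "(\<Sum>j\<in>UNIV. \<Sum>k\<in>UNIV. (W $ k $ j)^2 * (N * ln (mu $ j) - real n * a $ k * mu $ j - mu $ j ^ q))
        = (\<Sum>j\<in>UNIV. (N * ln (mu $ j) - mu $ j ^ q) - real n * (\<Sum>k\<in>UNIV. mu $ j * a $ k * (W $ k $ j)^2))"
      by (simp add: orth_col_sum[OF oW])
    also have "\<dots> = N * (\<Sum>j\<in>UNIV. ln (mu $ j)) - real n * T - (\<Sum>j\<in>UNIV. mu $ j ^ q)"
      by (simp add: T_def sum_subtractf sum_distrib_left)
    finally show ?thesis .
  qed
  have pw1: "det Sig powr (- real n / 2) = exp ((- real n / 2) * ln (det Sig))"
    using dSig by (simp add: powr_def)
  have pw2: "det Sig powr (- (real q * m + real CARD('p) + 1) / 2) = exp ((- (real q * m + real CARD('p) + 1) / 2) * ln (det Sig))"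
    using dSig by (simp add: powr_def)
  have "posterior c n X Psi m q nu Sig =
     (1/c) * det Psi powr (real q * m / 2) *
     (exp ((- real n / 2) * ln (det Sig)) * exp (- (1/2) * (real n * T + real n * Q))
      * exp (- (1/2) * (\<Sum>j\<in>UNIV. mu $ j ^ q)) * exp ((- (real q * m + real CARD('p) + 1) / 2) * ln (det Sig)))"
  proof -
    have "posterior c n X Psi m q nu Sig = det Sig powr (- real n / 2) * exp (- (1/2) * (real n * T + real n * Q)) *
       ((1 / c) * exp (- (1/2) * (\<Sum>j\<in>UNIV. mu $ j ^ q)) * det Psi powr (real q * m / 2)
        * det Sig powr (- (real q * m + real CARD('p) + 1) / 2))"
      unfolding posterior_def likelihood_def pow_inv_wishart_def quad[unfolded P_def] trq[unfolded Ri_def]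
      by (rule refl)
    then show ?thesis unfolding pw1 pw2 by (simp only: mult_ac)
  qed
  also have "exp ((- real n / 2) * ln (det Sig)) * exp (- (1/2) * (real n * T + real n * Q))
      * exp (- (1/2) * (\<Sum>j\<in>UNIV. mu $ j ^ q)) * exp ((- (real q * m + real CARD('p) + 1) / 2) * ln (det Sig))
    = exp (- (N/2) * ln (det Psi)) * exp ((1/2) * (N * (\<Sum>j\<in>UNIV. ln (mu $ j)) - real n * T - (\<Sum>j\<in>UNIV. mu $ j ^ q)) - (real n / 2) * Q)"
    unfolding exp_add[symmetric] lnSig Ndef by (simp add: field_simps)
  finally show ?thesis unfolding G[symmetric] W_def Q_def P_def by (simp add: mult_ac)
qed

lemma diag_mul_entry: "(diag_mat s ** W) $ i $ j = s $ i * W $ i $ j"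
  by (simp add: matrix_matrix_mult_def diag_mat_def if_distrib if_distribR sum.delta cong: if_cong)

lemma outer_quad: "e \<bullet> (outer y y *v e) = (y \<bullet> e)^2"
  by (simp add: outer_def inner_vec_def matrix_vector_mult_def power2_eq_square sum_product
      sum_distrib_left mult_ac)

lemma cov_psd: fixes X :: "nat \<Rightarrow> real^'p" shows "y \<bullet> (sample_cov n X *v y) \<ge> 0"
proof -
  define e where "e i = X i - sample_mean n X" for i
  define E where "E = (\<Sum>i<n. outer (e i) (e i))"
  have Sc: "sample_cov n X = (1 / real n) *\<^sub>R E" by (simp add: sample_cov_def E_def e_def)
  have "y \<bullet> (E *v y) = trace (E ** outer y y)"
    using tr_outer_sum[of E "\<lambda>_. y" "{0::nat}"] by simp
  also have "\<dots> = trace (outer y y ** E)" by (rule trace_mul_sym)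
  also have "\<dots> = (\<Sum>i<n. e i \<bullet> (outer y y *v e i))" unfolding E_def by (rule tr_outer_sum)
  also have "\<dots> = (\<Sum>i<n. (y \<bullet> e i)^2)" by (simp add: outer_quad)
  finally have "y \<bullet> (E *v y) \<ge> 0" by (simp add: sum_nonneg)
  moreover have "y \<bullet> (sample_cov n X *v y) = (1 / real n) * (y \<bullet> (E *v y))"
    by (simp add: Sc scaleR_matrix_vector_assoc[symmetric])
  ultimately show ?thesis by simp
qed

lemma a_nonneg:
  fixes X :: "nat \<Rightarrow> real^'p" and Psi V :: "real^'p^'p"
  assumes Psi: "pos_def_mat Psi" and V: "orthogonal_matrix V"
    and A: "matrix_inv (pd_sqrt Psi) ** sample_cov n X ** matrix_inv (pd_sqrt Psi) = V ** diag_mat a ** transpose V"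
  shows "a $ k \<ge> 0"
proof -
  define Ri where "Ri = matrix_inv (pd_sqrt Psi)"
  have symRi: "transpose Ri = Ri" using R_props(5)[OF Psi] pd_sym unfolding Ri_def by blast
  let ?v = "column k V"
  have vv: "?v \<bullet> ?v = 1" using V by (simp add: orthogonal_matrix_orthonormal_columns norm_eq_1)
  have "a $ k = ?v \<bullet> ((V ** diag_mat a ** transpose V) *v ?v)"
    using conj_eigvec[OF V] vv by simp
  also have "\<dots> = ?v \<bullet> (Ri *v (sample_cov n X *v (Ri *v ?v)))"
    by (simp add: A[folded Ri_def, symmetric] matrix_vector_mul_assoc matrix_mul_assoc)
  also have "\<dots> = (Ri *v ?v) \<bullet> (sample_cov n X *v (Ri *v ?v))"
    using symRi by (simp add: dot_mul_left)
  also have "\<dots> \<ge> 0" by (rule cov_psd)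
  finally show ?thesis .
qed

theorem theorem3:
  fixes X :: "nat \<Rightarrow> real^'p" and n :: nat and \<Psi> :: "real^'p^'p"
    and m :: real and q :: nat and c :: real
    and V :: "real^'p^'p" and a :: "real^'p"
  assumes "n \<ge> 1"
    and "pos_def_mat \<Psi>"
    and "m \<ge> real CARD('p)"
    and "q \<ge> 1"
    and "c > 0"
    and "orthogonal_matrix V"
    and "matrix_inv (pd_sqrt \<Psi>) ** sample_cov n X ** matrix_inv (pd_sqrt \<Psi>)
           = V ** diag_mat a ** transpose V"
  shows "let N = real n + real CARD('p) + real q * m + 1;
             lam = (\<chi> i. THE l. l > 0 \<and> real q * l ^ q + real n * a $ i * l - N = 0);
             \<Sigma>hat = pd_sqrt \<Psi> ** V ** matrix_inv (diag_mat lam) ** transpose V ** pd_sqrt \<Psi>;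
             \<mu>hat = sample_mean n X
         in (\<forall>i. \<exists>!l. l > 0 \<and> real q * l ^ q + real n * a $ i * l - N = 0)
            \<and> pos_def_mat \<Sigma>hat
            \<and> (\<forall>\<mu> \<Sigma>. pos_def_mat \<Sigma> \<and> (\<mu>, \<Sigma>) \<noteq> (\<mu>hat, \<Sigma>hat) \<longrightarrow>
                 posterior c n X \<Psi> m q \<mu> \<Sigma> < posterior c n X \<Psi> m q \<mu>hat \<Sigma>hat)"
proof -
  note n = assms(1) and Psi = assms(2) and V = assms(6) and A = assms(7)
  define N where "N = real n + real CARD('p) + real q * m + 1"
  define lam where "lam = (\<chi> i. THE l. l > 0 \<and> real q * l ^ q + real n * a $ i * l - N = 0)"
  define Sh where "Sh = pd_sqrt \<Psi> ** V ** matrix_inv (diag_mat lam) ** transpose V ** pd_sqrt \<Psi>"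
  define mh where "mh = sample_mean n X"
  define R where "R = pd_sqrt \<Psi>"
  define Ri where "Ri = matrix_inv (pd_sqrt \<Psi>)"
  note Rp = R_props[OF Psi, folded R_def Ri_def]
  have anon: "a $ k \<ge> 0" for k using a_nonneg[OF Psi V A] .
  have N1: "N \<ge> 1" using assms(3) unfolding N_def by simp
  have uniq: "\<exists>!l. l > 0 \<and> real q * l ^ q + real n * a $ i * l - N = 0" for i
    using root_unique[of "real n * a $ i" q N] anon[of i] assms(4) N1 by simp
  have lam: "lam $ i > 0" "real q * lam $ i ^ q + real n * a $ i * lam $ i - N = 0" for i
    using theI'[OF uniq[of i]] unfolding lam_def by auto
  have lam0: "lam $ i \<noteq> 0" for i using lam(1)[of i] by simp
  define Mi where "Mi = V ** diag_mat (\<chi> i. 1 / lam $ i) ** transpose V"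
  define Ml where "Ml = V ** diag_mat lam ** transpose V"
  have invD: "matrix_inv (diag_mat lam) = diag_mat (\<chi> i. 1 / lam $ i)"
    by (rule inv_unique) (simp add: diag_mat_mul lam0 diag_mat_one)
  have Sh2: "Sh = R ** Mi ** R" by (simp add: Sh_def invD Mi_def R_def matrix_mul_assoc)
  have pdMi: "pos_def_mat Mi" unfolding Mi_def using V lam(1) by (intro pd_of_eig) auto
  have pdSh: "pos_def_mat Sh" unfolding Sh2 using pd_congr[OF pdMi Rp(1)] .
  have MiMl: "Mi ** Ml = mat 1" unfolding Mi_def Ml_def using V
    by (simp add: conj_mul lam0 diag_mat_one orth_inv)
  have invSh: "matrix_inv Sh = Ri ** Ml ** Ri"
  proof (rule inv_unique)
    have "Sh ** (Ri ** Ml ** Ri) = R ** (Mi ** ((R ** Ri) ** Ml)) ** Ri"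
      by (simp add: Sh2 matrix_mul_assoc)
    also have "\<dots> = mat 1" using Rp MiMl by simp
    finally show "Sh ** (Ri ** Ml ** Ri) = mat 1" .
  qed
  have LamSh: "R ** matrix_inv Sh ** R = Ml"
    unfolding invSh by (rule sandwich_back[OF Rp(3) Rp(4)])
  define phi where "phi k t = N * ln t - real n * a $ k * t - t ^ q" for k t
  define K where "K = (1/c) * det \<Psi> powr (real q * m / 2) * exp (- (N/2) * ln (det \<Psi>))"
  have Kpos: "K > 0" unfolding K_def using assms(5) det_pos_pd[OF Psi] by simp
  define Ghat where "Ghat = (\<Sum>k\<in>UNIV. phi k (lam $ k))"
  have post_hat: "posterior c n X \<Psi> m q mh Sh = K * exp ((1/2) * Ghat)"
  proof -
    have "posterior c n X \<Psi> m q mh Sh = K * exp ((1/2) * (\<Sum>j\<in>UNIV. \<Sum>k\<in>UNIV. ((transpose V ** V) $ k $ j)^2 * phi k (lam $ j))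
         - (real n / 2) * ((sample_mean n X - mh) \<bullet> (matrix_inv Sh *v (sample_mean n X - mh))))"
      unfolding K_def phi_def
      by (rule post_formula[OF n Psi pdSh V lam(1) LamSh[unfolded R_def Ml_def] V A N_def])
    also have "(\<Sum>j\<in>UNIV. \<Sum>k\<in>UNIV. ((transpose V ** V) $ k $ j)^2 * phi k (lam $ j)) = Ghat"
      using V by (simp add: orth_inv' mat_def Ghat_def if_distrib if_distribR sum.delta cong: if_cong)
    finally show ?thesis by (simp add: mh_def)
  qed
  have main: "posterior c n X \<Psi> m q nu Sig < posterior c n X \<Psi> m q mh Sh"
    if Sig: "pos_def_mat Sig" and ne: "(nu, Sig) \<noteq> (mh, Sh)" for nu Sig
  proof -
    note LP = Lam_props[OF Psi Sig, folded R_def Ri_def]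
    obtain U mu where U: "orthogonal_matrix U" and Lam: "R ** matrix_inv Sig ** R = U ** diag_mat mu ** transpose U"
      and mu: "\<And>i. mu $ i > 0" using pd_decomp[OF LP(2)] by blast
    define W where "W = transpose V ** U"
    have oW: "orthogonal_matrix W" unfolding W_def using U V by (simp add: orthogonal_matrix_mul)
    define Q where "Q = (sample_mean n X - nu) \<bullet> (matrix_inv Sig *v (sample_mean n X - nu))"
    define G where "G = (\<Sum>j\<in>UNIV. \<Sum>k\<in>UNIV. (W $ k $ j)^2 * phi k (mu $ j))"
    have post: "posterior c n X \<Psi> m q nu Sig = K * exp ((1/2) * G - (real n / 2) * Q)"
      unfolding K_def phi_def G_def Q_def W_def
      by (rule post_formula[OF n Psi Sig U mu Lam[unfolded R_def] V A N_def])
    have pdP: "pos_def_mat (matrix_inv Sig)" using pd_inverse[OF Sig] by simp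
    have Qnn: "Q \<ge> 0"
    proof (cases "sample_mean n X - nu = 0")
      case True then show ?thesis by (simp add: Q_def)
    next
      case False then show ?thesis using pdP by (simp add: Q_def pos_def_mat_def less_imp_le)
    qed
    have Npos: "N > 0" using N1 by simp
    have phile: "phi k (mu $ j) \<le> phi k (lam $ k)" for j k
      unfolding phi_def using phi_max(1)[OF Npos lam(1)[of k] mu[of j] lam(2)[of k]] by (simp add: mult.assoc)
    have philt: "phi k (mu $ j) < phi k (lam $ k)" if "mu $ j \<noteq> lam $ k" for j k
      unfolding phi_def using phi_max(2)[OF Npos lam(1)[of k] mu[of j] lam(2)[of k] that] by (simp add: mult.assoc)
    have Ghat2: "(\<Sum>j\<in>UNIV. \<Sum>k\<in>UNIV. (W $ k $ j)^2 * phi k (lam $ k)) = Ghat"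
    proof -
      have "(\<Sum>j\<in>UNIV. \<Sum>k\<in>UNIV. (W $ k $ j)^2 * phi k (lam $ k)) = (\<Sum>k\<in>UNIV. \<Sum>j\<in>UNIV. (W $ k $ j)^2 * phi k (lam $ k))"
        by (rule sum.swap)
      also have "\<dots> = (\<Sum>k\<in>UNIV. (\<Sum>j\<in>UNIV. (W $ k $ j)^2) * phi k (lam $ k))"
        by (simp add: sum_distrib_right)
      also have "\<dots> = Ghat" by (simp add: orth_row_sum[OF oW] Ghat_def)
      finally show ?thesis .
    qed
    have Gle: "G \<le> Ghat"
    proof -
      have "G \<le> (\<Sum>j\<in>UNIV. \<Sum>k\<in>UNIV. (W $ k $ j)^2 * phi k (lam $ k))"
        unfolding G_def by (intro sum_mono mult_left_mono phile) simp
      then show ?thesis using Ghat2 by simp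
    qed
    have cmp: "(1/2) * G - (real n / 2) * Q < (1/2) * Ghat"
    proof (cases "Sig = Sh")
      case True
      then have "nu \<noteq> mh" using ne by simp
      then have "sample_mean n X - nu \<noteq> 0" by (simp add: mh_def)
      then have "Q > 0" using pdP by (simp add: Q_def pos_def_mat_def)
      then have nQ: "real n * Q > 0" using n by simp
      have e: "(1/2) * G - (real n / 2) * Q = (G - real n * Q) / 2" by (simp add: field_simps)
      have "G - real n * Q < Ghat" using Gle nQ by linarith
      then show ?thesis unfolding e by (simp add: field_simps)
    next
      case False
      have "\<exists>k j. W $ k $ j \<noteq> 0 \<and> mu $ j \<noteq> lam $ k"
      proof (rule ccontr)
        assume "\<not> ?thesis"
        then have cond: "W $ k $ j = 0 \<or> mu $ j = lam $ k" for k j by blast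
        have WD: "W ** diag_mat mu = diag_mat lam ** W"
          using cond by (auto simp: vec_eq_iff mul_diag_entry diag_mul_entry)
        have UVW: "U = V ** W" unfolding W_def using V by (simp add: matrix_mul_assoc orth_inv)
        have "U ** diag_mat mu ** transpose U = V ** (W ** diag_mat mu) ** transpose W ** transpose V"
          by (simp add: UVW matrix_transpose_mul matrix_mul_assoc)
        also have "\<dots> = V ** diag_mat lam ** (W ** transpose W) ** transpose V"
          by (simp add: WD matrix_mul_assoc)
        also have "\<dots> = Ml" using oW by (simp add: orth_inv Ml_def)
        finally have "R ** matrix_inv Sig ** R = R ** matrix_inv Sh ** R" using Lam LamSh by simp
        then have "Sig = Sh" using LP(3) Lam_props(3)[OF Psi pdSh, folded R_def Ri_def] by metis
        then show False using False by simp
      qed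
      then obtain k0 j0 where kj: "W $ k0 $ j0 \<noteq> 0" "mu $ j0 \<noteq> lam $ k0" by blast
      have "G < (\<Sum>j\<in>UNIV. \<Sum>k\<in>UNIV. (W $ k $ j)^2 * phi k (lam $ k))"
        unfolding G_def
      proof (rule sum_strict_mono_ex1)
        show "\<forall>j\<in>UNIV. (\<Sum>k\<in>UNIV. (W $ k $ j)^2 * phi k (mu $ j)) \<le> (\<Sum>k\<in>UNIV. (W $ k $ j)^2 * phi k (lam $ k))"
          by (intro ballI sum_mono mult_left_mono phile) simp
        have "(\<Sum>k\<in>UNIV. (W $ k $ j0)^2 * phi k (mu $ j0)) < (\<Sum>k\<in>UNIV. (W $ k $ j0)^2 * phi k (lam $ k))"
        proof (rule sum_strict_mono_ex1)
          show "\<forall>k\<in>UNIV. (W $ k $ j0)^2 * phi k (mu $ j0) \<le> (W $ k $ j0)^2 * phi k (lam $ k)"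
            by (intro ballI mult_left_mono phile) simp
          have "(W $ k0 $ j0)^2 > 0" using kj(1) by simp
          then have "(W $ k0 $ j0)^2 * phi k0 (mu $ j0) < (W $ k0 $ j0)^2 * phi k0 (lam $ k0)"
            using philt[OF kj(2)] by (simp add: mult_strict_left_mono)
          then show "\<exists>k\<in>UNIV. (W $ k $ j0)^2 * phi k (mu $ j0) < (W $ k $ j0)^2 * phi k (lam $ k)" by blast
        qed simp
        then show "\<exists>j\<in>UNIV. (\<Sum>k\<in>UNIV. (W $ k $ j)^2 * phi k (mu $ j)) < (\<Sum>k\<in>UNIV. (W $ k $ j)^2 * phi k (lam $ k))"
          by blast
      qed simp
      then have "G < Ghat" using Ghat2 by simp
      moreover have "real n * Q \<ge> 0" using Qnn by simp
      moreover have e: "(1/2) * G - (real n / 2) * Q = (G - real n * Q) / 2" by (simp add: field_simps)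
      ultimately have "G - real n * Q < Ghat" by linarith
      then show ?thesis unfolding e by (simp add: field_simps)
    qed
    show ?thesis unfolding post post_hat using Kpos cmp by simp
  qed
  have res: "(\<forall>i. \<exists>!l. l > 0 \<and> real q * l ^ q + real n * a $ i * l - N = 0)
            \<and> pos_def_mat Sh
            \<and> (\<forall>\<mu> \<Sigma>. pos_def_mat \<Sigma> \<and> (\<mu>, \<Sigma>) \<noteq> (mh, Sh) \<longrightarrow>
                 posterior c n X \<Psi> m q \<mu> \<Sigma> < posterior c n X \<Psi> m q mh Sh)"
    using uniq pdSh main by blast
  show ?thesis unfolding Let_def using res[unfolded mh_def Sh_def lam_def N_def] .
qed

end
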